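(* For every $\delta>0$ there is $\kappa>0$ with the following property. Let $\varepsilon\in(0,1)$, let $a,b\in\mathbb{R}^d$ with $a\ne b$, and let $P_{ab}$ be a monotone polygonal $ab$-path. For $\alpha\in[0,\pi/2]$ let $F(\alpha)$ be the set of edges $e$ of $P_{ab}$ with $\angle(ab,e)\ge\alpha$, and $\|F(\alpha)\|$ their total length. If $\|F(i\sqrt{\varepsilon\kappa})\|\le\|P_{ab}\|/i^{2+\delta}$ for all integers $i\in\{1,\dots,\lceil(\pi/2)/\sqrt{\varepsilon\kappa}\rceil\}$, then $\|P_{ab}\|\le(1+\varepsilon)\|ab\|$.
   Context: An $ab$-path $(v_0=a,v_1,\dots,v_m=b)$ is monotone if $(v_i-v_{i-1})\cdot(b-a)\ge 0$ for all $i$ (equivalently, it crosses every hyperplane orthogonal to $ab$ at most once). For undirected segments $e_1,e_2$ with unit direction vectors $\pm\vec u_1,\pm\vec u_2$, $\angle(e_1,e_2)=\arccos|\vec u_1\cdot\vec u_2|$. *)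

theory Defs
  imports Complex_Main
begin

text \<open>Points of R^d are represented as functions nat => real vanishing at
  all coordinates >= d, so that the dimension d can be quantified inside
  the statement (kappa must not depend on d).\<close>

definition is_pt :: "nat \<Rightarrow> (nat \<Rightarrow> real) \<Rightarrow> bool" where
  "is_pt d x \<longleftrightarrow> (\<forall>i\<ge>d. x i = 0)"

definition dotd :: "nat \<Rightarrow> (nat \<Rightarrow> real) \<Rightarrow> (nat \<Rightarrow> real) \<Rightarrow> real" where
  "dotd d x y = (\<Sum>i<d. x i * y i)"

definition normd :: "nat \<Rightarrow> (nat \<Rightarrow> real) \<Rightarrow> real" where
  "normd d x = sqrt (dotd d x x)"

definition distd :: "nat \<Rightarrow> (nat \<Rightarrow> real) \<Rightarrow> (nat \<Rightarrow> real) \<Rightarrow> real" where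
  "distd d x y = normd d (\<lambda>i. y i - x i)"

definition polygonal_path :: "nat \<Rightarrow> (nat \<Rightarrow> real) \<Rightarrow> (nat \<Rightarrow> real) \<Rightarrow> (nat \<Rightarrow> real) list \<Rightarrow> bool" where
  "polygonal_path d a b vs \<longleftrightarrow> length vs \<ge> 2 \<and> hd vs = a \<and> last vs = b \<and>
     (\<forall>v\<in>set vs. is_pt d v) \<and> (\<forall>i. Suc i < length vs \<longrightarrow> vs ! i \<noteq> vs ! Suc i)"

definition monotone_path :: "nat \<Rightarrow> (nat \<Rightarrow> real) \<Rightarrow> (nat \<Rightarrow> real) \<Rightarrow> (nat \<Rightarrow> real) list \<Rightarrow> bool" where
  "monotone_path d a b vs \<longleftrightarrow>
     (\<forall>i. Suc i < length vs \<longrightarrow> dotd d (\<lambda>j. (vs ! Suc i) j - (vs ! i) j) (\<lambda>j. b j - a j) \<ge> 0)"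

definition seg_angle :: "nat \<Rightarrow> (nat \<Rightarrow> real) \<Rightarrow> (nat \<Rightarrow> real) \<Rightarrow> (nat \<Rightarrow> real) \<Rightarrow> (nat \<Rightarrow> real) \<Rightarrow> real" where
  "seg_angle d p q r s = arccos (\<bar>dotd d (\<lambda>j. q j - p j) (\<lambda>j. s j - r j)\<bar>
                                   / (distd d p q * distd d r s))"

definition path_len :: "nat \<Rightarrow> (nat \<Rightarrow> real) list \<Rightarrow> real" where
  "path_len d vs = (\<Sum>i<length vs - 1. distd d (vs ! i) (vs ! Suc i))"

definition F_len :: "nat \<Rightarrow> (nat \<Rightarrow> real) \<Rightarrow> (nat \<Rightarrow> real) \<Rightarrow> (nat \<Rightarrow> real) list \<Rightarrow> real \<Rightarrow> real" where
  "F_len d a b vs \<alpha> = (\<Sum>i\<in>{i. i < length vs - 1 \<and> seg_angle d a b (vs ! i) (vs ! Suc i) \<ge> \<alpha>}.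
                          distd d (vs ! i) (vs ! Suc i))"

end

theory Submission
  imports Defs "HOL-Analysis.Analysis"
begin

lemma dotd_nonneg_self: "0 \<le> dotd d x x"
  unfolding dotd_def by (intro sum_nonneg) auto

lemma normd_sq: "(normd d x)^2 = dotd d x x"
  unfolding normd_def using dotd_nonneg_self by simp

lemma normd_nonneg: "0 \<le> normd d x"
  unfolding normd_def using dotd_nonneg_self by simp

lemma dot_cs: "\<bar>dotd d x y\<bar> \<le> normd d x * normd d y"
proof -
  have "\<bar>dotd d x y\<bar> \<le> (\<Sum>i<d. \<bar>x i\<bar> * \<bar>y i\<bar>)"
    unfolding dotd_def by (metis (no_types, lifting) abs_mult sum.cong sum_abs)
  also have "\<dots> \<le> L2_set x {..<d} * L2_set y {..<d}" by (rule L2_set_mult_ineq)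
  also have "\<dots> = normd d x * normd d y"
    unfolding L2_set_def normd_def dotd_def by (simp add: power2_eq_square)
  finally show ?thesis .
qed

lemma distd_pos:
  assumes "is_pt d x" "is_pt d y" "x \<noteq> y"
  shows "0 < distd d x y"
proof -
  obtain j where j: "x j \<noteq> y j" using assms(3) by auto
  have "j < d" using j assms(1,2) unfolding is_pt_def by (cases "j < d") auto
  have "0 < (\<Sum>i<d. (y i - x i) * (y i - x i))"
    by (rule sum_pos2[where i=j]) (use j \<open>j<d\<close> in \<open>auto simp: zero_less_mult_iff linorder_neq_iff\<close>)
  then show ?thesis unfolding distd_def normd_def dotd_def by simp
qed

lemma dotd_comm: "dotd d x y = dotd d y x"
  unfolding dotd_def by (simp add: mult.commute)

lemma dotd_diff: "dotd d w (\<lambda>j. q j - p j) = dotd d w q - dotd d w p"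
  unfolding dotd_def by (simp add: sum_subtractf right_diff_distrib)

lemma one_minus_cos: "1 - cos (t::real) \<le> t^2 / 2"
proof -
  have "cos t = cos (2 * (t/2))" by simp
  also have "\<dots> = 1 - 2 * (sin (t/2))^2" using cos_double[of "t/2"] cos_squared_eq[of "t/2"] by simp
  finally have c: "cos t = 1 - 2 * (sin (t/2))^2" .
  have "\<bar>sin (t/2)\<bar> \<le> \<bar>t/2\<bar>" by (rule abs_sin_x_le_abs_x)
  then have "(sin (t/2))^2 \<le> (t/2)^2"
    by (metis abs_ge_zero power2_abs power_mono)
  then show ?thesis using c by (simp add: power_divide)
qed

lemma sum_odd: "(\<Sum>k\<le>K. 2 * real k + 1) = (real K + 1)^2"
  by (induction K) (auto simp: power2_eq_square algebra_simps)

lemma floor_bound: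
  assumes s: "0 < s" and th: "0 \<le> \<theta>" "\<theta> \<le> pi/2" and N: "(pi/2)/s \<le> real N"
  shows "\<theta>^2 \<le> s^2 * (\<Sum>k\<le>N. if real k * s \<le> \<theta> then 2 * real k + 1 else 0)"
proof -
  define K where "K = nat \<lfloor>\<theta>/s\<rfloor>"
  have q0: "0 \<le> \<theta>/s" using th s by simp
  have Kf: "real K = of_int \<lfloor>\<theta>/s\<rfloor>" unfolding K_def using q0 by simp
  have "\<theta>/s \<le> (pi/2)/s" using th s by (intro divide_right_mono) auto
  moreover have "real K \<le> \<theta>/s" using Kf by linarith
  ultimately have "real K \<le> real N" using N by linarith
  hence KN: "K \<le> N" by simp
  have set: "{k\<in>{..N}. real k * s \<le> \<theta>} = {..K}"
  proof (rule set_eqI)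
    fix k
    have "real k * s \<le> \<theta> \<longleftrightarrow> real k \<le> \<theta>/s" using s by (simp add: pos_le_divide_eq)
    also have "\<dots> \<longleftrightarrow> int k \<le> \<lfloor>\<theta>/s\<rfloor>" by (simp add: le_floor_iff)
    also have "\<dots> \<longleftrightarrow> k \<le> K" unfolding K_def using q0 by (auto simp: le_nat_iff)
    finally show "k \<in> {k\<in>{..N}. real k * s \<le> \<theta>} \<longleftrightarrow> k \<in> {..K}" using KN by auto
  qed
  have "(\<Sum>k\<le>N. if real k * s \<le> \<theta> then 2 * real k + 1 else 0)
        = (\<Sum>k\<in>{k\<in>{..N}. real k * s \<le> \<theta>}. 2 * real k + 1)"
    by (rule sum.inter_filter[symmetric]) simp
  also have "\<dots> = (real K + 1)^2" using set sum_odd by simp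
  finally have eq: "(\<Sum>k\<le>N. if real k * s \<le> \<theta> then 2 * real k + 1 else 0) = (real K + 1)^2" .
  have "\<theta>/s < real K + 1" using Kf by linarith
  hence "\<theta> < (real K + 1) * s" using s by (simp add: divide_less_eq)
  hence "\<theta>^2 \<le> ((real K + 1) * s)^2" using th by (intro power_mono) auto
  then show ?thesis using eq by (simp add: power_mult_distrib mult.commute)
qed

lemma series_bound:
  assumes "0 < (\<delta>::real)"
  shows "(\<Sum>k\<in>{1..N}. real k powr (-1-\<delta>)) \<le> (\<Sum>n. real n powr (-1-\<delta>))"
proof -
  have "summable (\<lambda>n. real n powr (-1-\<delta>))" using assms by (subst summable_real_powr_iff) auto
  then show ?thesis by (rule sum_le_suminf) auto
qed


lemma main:
  fixes \<delta> \<epsilon> \<kappa> C :: real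
  assumes \<delta>: "0 < \<delta>" and C_def: "C = 1 + 3 * (\<Sum>n. real n powr (-1-\<delta>))"
    and \<kappa>_def: "\<kappa> = 1 / (2 * C)"
    and \<epsilon>: "0 < \<epsilon>" "\<epsilon> < 1"
    and pa: "is_pt d a" "is_pt d b" "a \<noteq> b"
    and pp: "polygonal_path d a b vs" and mp: "monotone_path d a b vs"
    and hyp: "\<forall>i::nat. 1 \<le> i \<and> real i \<le> of_int \<lceil>(pi / 2) / sqrt (\<epsilon> * \<kappa>)\<rceil> \<longrightarrow>
            F_len d a b vs (real i * sqrt (\<epsilon> * \<kappa>)) \<le> path_len d vs / (real i) powr (2 + \<delta>)"
  shows "path_len d vs \<le> (1 + \<epsilon>) * distd d a b"
proof -
  define S where "S = (\<Sum>n. real n powr (-1-\<delta>))"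
  have summ: "summable (\<lambda>n. real n powr (-1-\<delta>))" using \<delta> by (subst summable_real_powr_iff) auto
  have S0: "0 \<le> S" unfolding S_def using summ by (intro suminf_nonneg) auto
  have Cpos: "C \<ge> 1" using S0 C_def S_def by simp
  have \<kappa>pos: "0 < \<kappa>" using Cpos \<kappa>_def by simp
  define m where "m = length vs - 1"
  define l where "l i = distd d (vs!i) (vs!Suc i)" for i
  define D where "D = distd d a b"
  define L where "L = path_len d vs"
  define w where "w = (\<lambda>j. b j - a j)"
  define e where "e i = dotd d w (\<lambda>j. (vs!Suc i) j - (vs!i) j)" for i
  define \<theta> where "\<theta> i = seg_angle d a b (vs!i) (vs!Suc i)" for i
  define s where "s = sqrt (\<epsilon> * \<kappa>)"
  define N where "N = nat \<lceil>(pi/2)/s\<rceil>"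
  have spos: "0 < s" unfolding s_def using \<epsilon> \<kappa>pos by simp
  have s2: "s^2 = \<epsilon> * \<kappa>" unfolding s_def using \<epsilon> \<kappa>pos by simp
  have len: "length vs \<ge> 2" "hd vs = a" "last vs = b" and ptsv: "\<forall>v\<in>set vs. is_pt d v"
    and distinct: "\<forall>i. Suc i < length vs \<longrightarrow> vs ! i \<noteq> vs ! Suc i"
    using pp unfolding polygonal_path_def by auto
  have pts: "is_pt d (vs!i)" if "i < length vs" for i using ptsv that by auto
  have lpos: "0 < l i" if "i < m" for i
    unfolding l_def using that pts distinct m_def by (intro distd_pos) auto
  have Dpos: "0 < D" unfolding D_def using pa by (intro distd_pos) auto
  have Dn: "D = normd d w" unfolding D_def distd_def w_def by simp
  have ln: "l i = normd d (\<lambda>j. (vs!Suc i) j - (vs!i) j)" for i unfolding l_def distd_def by simp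
  have e0: "0 \<le> e i" if "i < m" for i
    using mp that unfolding monotone_path_def e_def m_def w_def by (subst dotd_comm) auto
  have eD: "e i \<le> D * l i" for i
    unfolding e_def Dn ln using dot_cs by (meson abs_ge_self order_trans)
  define c where "c i = e i / (D * l i)" for i
  have c01: "0 \<le> c i \<and> c i \<le> 1" if "i < m" for i
    using e0[OF that] eD[of i] lpos[OF that] Dpos unfolding c_def by (auto simp: divide_le_eq)
  have th_eq: "\<theta> i = arccos (c i)" if "i < m" for i
    unfolding \<theta>_def seg_angle_def c_def using e0[OF that]
    by (simp add: e_def w_def D_def l_def)
  have th_b: "0 \<le> \<theta> i \<and> \<theta> i \<le> pi/2" if "i < m" for i
    using th_eq[OF that] c01[OF that] arccos_lbound[of "c i"] arccos_le_pi2[of "c i"] by auto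
  have cos_th: "cos (\<theta> i) = c i" if "i < m" for i
    using th_eq[OF that] c01[OF that] by (simp add: cos_arccos)
  have lc: "l i * c i = e i / D" if "i < m" for i
    using lpos[OF that] Dpos unfolding c_def by (simp add: field_simps)
  define g where "g n = dotd d w (vs!n)" for n
  have eg: "e i = g (Suc i) - g i" for i unfolding e_def g_def by (rule dotd_diff)
  have "(\<Sum>i<m. e i) = g m - g 0" unfolding eg by (rule sum_lessThan_telescope)
  also have "g m = dotd d w b" unfolding g_def m_def using len last_conv_nth[of vs] by fastforce
  also have "g 0 = dotd d w a" unfolding g_def using len hd_conv_nth[of vs] by fastforce
  also have "dotd d w b - dotd d w a = dotd d w w" using dotd_diff[of d w b a] unfolding w_def by simp
  also have "\<dots> = D^2" unfolding Dn by (simp add: normd_sq)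
  finally have sumE: "(\<Sum>i<m. e i) = D^2" .
  have Ldef: "L = (\<Sum>i<m. l i)" unfolding L_def path_len_def m_def l_def by simp
  have L0: "0 \<le> L" unfolding Ldef using lpos by (intro sum_nonneg) (auto intro: less_imp_le)
  have sumlc: "(\<Sum>i<m. l i * cos (\<theta> i)) = D"
  proof -
    have "(\<Sum>i<m. l i * cos (\<theta> i)) = (\<Sum>i<m. e i / D)"
      using cos_th lc by (intro sum.cong) auto
    also have "\<dots> = (\<Sum>i<m. e i) / D" by (simp add: sum_divide_distrib)
    finally show ?thesis using sumE Dpos by (simp add: power2_eq_square)
  qed
  have LD: "L - D = (\<Sum>i<m. l i * (1 - cos (\<theta> i)))"
    unfolding Ldef sumlc[symmetric] by (simp add: sum_subtractf right_diff_distrib)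
  define G where "G i = (\<Sum>k\<le>N. if real k * s \<le> \<theta> i then 2 * real k + 1 else 0)" for i
  have NN: "(pi/2)/s \<le> real N" unfolding N_def by linarith
  have step1: "l i * (1 - cos (\<theta> i)) \<le> l i * (s^2 * G i) / 2" if "i < m" for i
  proof -
    have "1 - cos (\<theta> i) \<le> (\<theta> i)^2 / 2" by (rule one_minus_cos)
    also have "(\<theta> i)^2 \<le> s^2 * G i" unfolding G_def using th_b[OF that] spos NN
      by (intro floor_bound) auto
    finally show ?thesis using lpos[OF that] by (simp add: mult_left_mono)
  qed
  define F where "F k = F_len d a b vs (real k * s)" for k
  have Fsum: "F k = (\<Sum>i<m. if real k * s \<le> \<theta> i then l i else 0)" for k
  proof -
    have "{i. i < length vs - 1 \<and> real k * s \<le> seg_angle d a b (vs ! i) (vs ! Suc i)}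
          = {i\<in>{..<m}. real k * s \<le> \<theta> i}" unfolding m_def \<theta>_def by auto
    then show ?thesis unfolding F_def F_len_def l_def
      by (simp add: sum.inter_filter[symmetric] \<theta>_def m_def l_def)
  qed
  have exch: "(\<Sum>i<m. l i * G i) = (\<Sum>k\<le>N. (2 * real k + 1) * F k)"
  proof -
    have "(\<Sum>i<m. l i * G i) = (\<Sum>i<m. \<Sum>k\<le>N. l i * (if real k * s \<le> \<theta> i then 2 * real k + 1 else 0))"
      unfolding G_def by (simp add: sum_distrib_left)
    also have "\<dots> = (\<Sum>k\<le>N. \<Sum>i<m. l i * (if real k * s \<le> \<theta> i then 2 * real k + 1 else 0))"
      by (rule sum.swap)
    also have "\<dots> = (\<Sum>k\<le>N. (2 * real k + 1) * F k)"
      unfolding Fsum sum_distrib_left by (intro sum.cong refl) (auto simp: mult.commute)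
    finally show ?thesis .
  qed
  have F0: "F 0 \<le> L" unfolding Fsum Ldef
    by (intro sum_mono) (use lpos in \<open>auto intro: less_imp_le\<close>)
  have Fk: "(2 * real k + 1) * F k \<le> 3 * L * real k powr (-1-\<delta>)" if "k \<in> {1..N}" for k
  proof -
    have k1: "1 \<le> k" "k \<le> N" using that by auto
    have "0 \<le> (pi/2)/s" using spos pi_gt_zero by (intro divide_nonneg_pos) auto
    hence ceil0: "0 \<le> \<lceil>(pi/2)/s\<rceil>" by simp
    have "real k \<le> of_int \<lceil>(pi / 2) / s\<rceil>" using k1 ceil0 unfolding N_def
      by (metis of_nat_le_iff of_nat_nat)
    hence Fb: "F k \<le> L / real k powr (2 + \<delta>)"
      using hyp k1 unfolding F_def L_def s_def by auto
    have kp: "0 < real k" using k1 by simp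
    have Fnn: "0 \<le> F k" unfolding Fsum using lpos by (intro sum_nonneg) (auto intro: less_imp_le)
    have "(2 * real k + 1) * F k \<le> (3 * real k) * F k" using k1 Fnn by (intro mult_right_mono) auto
    also have "\<dots> \<le> (3 * real k) * (L / real k powr (2 + \<delta>))" using Fb kp by (intro mult_left_mono) auto
    also have "\<dots> = 3 * L * (real k powr 1 * real k powr (-(2+\<delta>)))"
      using kp powr_minus_divide[of "real k" "2+\<delta>"] by simp
    also have "real k powr 1 * real k powr (-(2+\<delta>)) = real k powr (-1-\<delta>)"
      using powr_add[of "real k" 1 "-(2+\<delta>)"] kp by (simp add: algebra_simps)
    finally show ?thesis .
  qed
  have "(\<Sum>k\<le>N. (2 * real k + 1) * F k) = F 0 + (\<Sum>k\<in>{1..N}. (2 * real k + 1) * F k)"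
  proof -
    have "{..N} = insert 0 {1..N}" by auto
    then show ?thesis by simp
  qed
  also have "\<dots> \<le> L + (\<Sum>k\<in>{1..N}. 3 * L * real k powr (-1-\<delta>))"
    using F0 Fk by (intro add_mono sum_mono) auto
  also have "(\<Sum>k\<in>{1..N}. 3 * L * real k powr (-1-\<delta>)) = 3 * L * (\<Sum>k\<in>{1..N}. real k powr (-1-\<delta>))"
    by (simp add: sum_distrib_left)
  also have "\<dots> \<le> 3 * L * S" unfolding S_def using series_bound[OF \<delta>] L0 by (intro mult_left_mono) auto
  finally have sumF: "(\<Sum>k\<le>N. (2 * real k + 1) * F k) \<le> C * L" using C_def S_def by (simp add: algebra_simps)
  have "L - D \<le> (\<Sum>i<m. l i * (s^2 * G i) / 2)" unfolding LD using step1 by (intro sum_mono) auto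
  also have "\<dots> = s^2 / 2 * (\<Sum>i<m. l i * G i)" by (simp add: sum_distrib_left sum_divide_distrib algebra_simps)
  also have "\<dots> \<le> s^2 / 2 * (C * L)" unfolding exch using sumF by (intro mult_left_mono) auto
  also have "\<dots> = \<epsilon> * L / 4" unfolding s2 \<kappa>_def using Cpos by (simp add: field_simps)
  finally have LDe: "L - D \<le> \<epsilon> * L / 4" .
  have "L \<le> (1 + \<epsilon>) * D"
  proof -
    have "L * (1 - \<epsilon>/4) \<le> D" using LDe by (simp add: algebra_simps)
    hence "(1 + \<epsilon>) * (L * (1 - \<epsilon>/4)) \<le> (1 + \<epsilon>) * D" using \<epsilon> by (intro mult_left_mono) auto
    moreover have "L \<le> (1 + \<epsilon>) * (L * (1 - \<epsilon>/4))"
    proof -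
      have "(1 + \<epsilon>) * (1 - \<epsilon>/4) \<ge> 1" using \<epsilon> by (simp add: algebra_simps power2_eq_square)
      then have "L * 1 \<le> L * ((1 + \<epsilon>) * (1 - \<epsilon>/4))" using L0 by (intro mult_left_mono) auto
      then show ?thesis by (simp add: algebra_simps)
    qed
    ultimately show ?thesis by linarith
  qed
  then show ?thesis unfolding L_def D_def .
qed

theorem lemma3:
  "\<forall>\<delta>::real. \<delta> > 0 \<longrightarrow> (\<exists>\<kappa>::real. \<kappa> > 0 \<and>
     (\<forall>(\<epsilon>::real) (d::nat) a b vs.
        0 < \<epsilon> \<and> \<epsilon> < 1 \<and> is_pt d a \<and> is_pt d b \<and> a \<noteq> b \<and>
        polygonal_path d a b vs \<and> monotone_path d a b vs \<and>
        (\<forall>i::nat. 1 \<le> i \<and> real i \<le> of_int \<lceil>(pi / 2) / sqrt (\<epsilon> * \<kappa>)\<rceil> \<longrightarrow>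
            F_len d a b vs (real i * sqrt (\<epsilon> * \<kappa>)) \<le> path_len d vs / (real i) powr (2 + \<delta>))
        \<longrightarrow> path_len d vs \<le> (1 + \<epsilon>) * distd d a b))"
proof (intro allI impI)
  fix \<delta> :: real assume \<delta>: "\<delta> > 0"
  define C where "C = 1 + 3 * (\<Sum>n. real n powr (-1-\<delta>))"
  have summ: "summable (\<lambda>n. real n powr (-1-\<delta>))" using \<delta> by (subst summable_real_powr_iff) auto
  have "0 \<le> (\<Sum>n. real n powr (-1-\<delta>))" using summ by (intro suminf_nonneg) auto
  then have Cpos: "C \<ge> 1" unfolding C_def by simp
  show "\<exists>\<kappa>::real. \<kappa> > 0 \<and>
     (\<forall>(\<epsilon>::real) (d::nat) a b vs.
        0 < \<epsilon> \<and> \<epsilon> < 1 \<and> is_pt d a \<and> is_pt d b \<and> a \<noteq> b \<and>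
        polygonal_path d a b vs \<and> monotone_path d a b vs \<and>
        (\<forall>i::nat. 1 \<le> i \<and> real i \<le> of_int \<lceil>(pi / 2) / sqrt (\<epsilon> * \<kappa>)\<rceil> \<longrightarrow>
            F_len d a b vs (real i * sqrt (\<epsilon> * \<kappa>)) \<le> path_len d vs / (real i) powr (2 + \<delta>))
        \<longrightarrow> path_len d vs \<le> (1 + \<epsilon>) * distd d a b)"
    apply (rule exI[of _ "1 / (2 * C)"])
    using Cpos main[OF \<delta> C_def refl] by auto
qed

end
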